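(* Let $p$ be a prime, $n\ge2$, $1\le k\le n-1$ and $0\le l\le n$. Then \[ \nu_{n,k,l}(p)=G_{k,n}+(p^l-1)G_{k-1,n-1}, \] and moreover \[ \nu_{n,k,l}(p)/\nu_{n,n-k,n-l}(p)=p^{k+l-n}. \]
   Context: For $0\le j\le n$, $\nu_{n,k,j}(p)=\sum_{W\subset\mathbb{F}_p^n,\ \dim W=k}p^{\dim(W\cap U)}$, where $U\subset\mathbb{F}_p^n$ is any fixed $j$-dimensional subspace (the value is independent of $U$). $G_{a,b}$ is the number of $a$-dimensional subspaces of $\mathbb{F}_p^b$, i.e. $G_{a,b}=\frac{[b]!}{[a]![b-a]!}$ with $[m]=(p^m-1)/(p-1)$ and $[m]!=\prod_{i=1}^m[i]$. *)

theory Defs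
  imports "HOL-Analysis.Analysis"
begin

text \<open>The vector space F_p^n is modelled as 'a ^ 'n, where 'a is a finite field with
  CARD('a) = p prime (hence 'a is isomorphic to F_p) and n = CARD('n).\<close>

definition nu :: "nat \<Rightarrow> ('a::{field,finite} ^ 'n) set \<Rightarrow> nat" where
  "nu k U = (\<Sum>W\<in>{W. vec.subspace W \<and> vec.dim W = k}.
               CARD('a) ^ vec.dim (W \<inter> U))"

definition qint :: "nat \<Rightarrow> nat \<Rightarrow> real" where
  "qint p m = (real p ^ m - 1) / (real p - 1)"

definition qfact :: "nat \<Rightarrow> nat \<Rightarrow> real" where
  "qfact p m = (\<Prod>i\<in>{1..m}. qint p i)"

definition G :: "nat \<Rightarrow> nat \<Rightarrow> nat \<Rightarrow> real" where
  "G p a b = qfact p b / (qfact p a * qfact p (b - a))"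

end

theory Submission
  imports Defs
begin


lemma card_subspace:
  fixes S :: "('a::{field,finite}^'n) set"
  assumes "vec.subspace S"
  shows "card S = CARD('a) ^ vec.dim S"
proof -
  obtain B where B: "B \<subseteq> S" "vec.independent B" "S \<subseteq> vec.span B" "card B = vec.dim S"
    using vec.basis_exists by blast
  have fB: "finite B" by simp
  have SB: "vec.span B = S" using B assms vec.span_subspace by blast
  define f where "f u = (\<Sum>v\<in>B. u v *s v)" for u :: "_ \<Rightarrow> 'a"
  have img: "f ` (PiE B (\<lambda>_. UNIV)) = S"
  proof
    show "f ` (PiE B (\<lambda>_. UNIV)) \<subseteq> S"
      using SB vec.span_finite[OF fB] f_def by auto
    show "S \<subseteq> f ` (PiE B (\<lambda>_. UNIV))"
    proof
      fix x assume "x \<in> S"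
      then obtain u where "x = f u" using SB vec.span_finite[OF fB] f_def by auto
      moreover have "f u = f (restrict u B)" unfolding f_def by (rule sum.cong) auto
      ultimately show "x \<in> f ` (PiE B (\<lambda>_. UNIV))" by auto
    qed
  qed
  have inj: "inj_on f (PiE B (\<lambda>_. UNIV))"
  proof (rule inj_onI)
    fix u w assume u: "u \<in> PiE B (\<lambda>_. UNIV)" and w: "w \<in> PiE B (\<lambda>_. UNIV)" and e: "f u = f w"
    have "(\<Sum>v\<in>B. (u v - w v) *s v) = 0"
      using e unfolding f_def by (simp add: vector_sub_rdistrib sum_subtractf)
    then have "\<forall>v\<in>B. u v - w v = 0"
      using vec.independent_explicit[THEN iffD1, OF B(2), THEN conjunct2, rule_format, of "\<lambda>v. u v - w v"] by simp
    then show "u = w" using u w by (auto simp: PiE_def extensional_def fun_eq_iff)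
  qed
  have "card S = card (PiE B (\<lambda>_. UNIV :: 'a set))" using card_image[OF inj] img by simp
  also have "\<dots> = CARD('a) ^ card B" by (simp add: card_PiE fB)
  finally show ?thesis using B(4) by simp
qed



definition Ext :: "('a::{field,finite}^'n) set \<Rightarrow> ('a^'n) list \<Rightarrow> nat \<Rightarrow> ('a^'n) list set" where
  "Ext V xs r = {ys. length ys = r \<and> set ys \<subseteq> V \<and> distinct (xs@ys) \<and> vec.independent (set (xs@ys))}"

lemma finite_Ext: "finite (Ext V xs r)"
proof -
  have "Ext V xs r \<subseteq> {ys. set ys \<subseteq> UNIV \<and> length ys = r}" by (auto simp: Ext_def)
  moreover have "finite {ys::('a^'n) list. set ys \<subseteq> UNIV \<and> length ys = r}"
    by (rule finite_lists_length_eq) simp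
  ultimately show ?thesis using finite_subset by blast
qed

lemma Ext_Suc:
  assumes "vec.subspace V"
  shows "Ext V xs (Suc r) = (\<lambda>(y,ys). y#ys) ` (SIGMA y:(V - vec.span (set xs)). Ext V (xs@[y]) r)"
proof
  show "Ext V xs (Suc r) \<subseteq> (\<lambda>(y,ys). y#ys) ` (SIGMA y:(V - vec.span (set xs)). Ext V (xs@[y]) r)"
  proof
    fix zs assume z: "zs \<in> Ext V xs (Suc r)"
    then obtain y ys where zs: "zs = y#ys" by (cases zs) (auto simp: Ext_def)
    have ind: "vec.independent (set (xs @ y # ys))" and d: "distinct (xs @ y # ys)"
      using z zs by (auto simp: Ext_def)
    have ii: "vec.independent (insert y (set xs))"
      using vec.independent_mono[OF ind] by auto
    moreover have "y \<notin> set xs" using d by auto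
    ultimately have "y \<notin> vec.span (set xs)" by (simp add: vec.independent_insert)
    moreover have "y \<in> V" using z zs by (auto simp: Ext_def)
    moreover have "ys \<in> Ext V (xs@[y]) r" using z zs by (auto simp: Ext_def)
    ultimately show "zs \<in> (\<lambda>(y,ys). y#ys) ` (SIGMA y:(V - vec.span (set xs)). Ext V (xs@[y]) r)"
      using zs by force
  qed
  show "(\<lambda>(y,ys). y#ys) ` (SIGMA y:(V - vec.span (set xs)). Ext V (xs@[y]) r) \<subseteq> Ext V xs (Suc r)"
    by (auto simp: Ext_def)
qed

lemma card_span_list:
  fixes xs :: "('a::{field,finite}^'n) list"
  assumes "distinct xs" "vec.independent (set xs)"
  shows "card (vec.span (set xs)) = CARD('a) ^ length xs"
  using card_subspace[of "vec.span (set xs)"] vec.dim_span_eq_card_independent[OF assms(2)]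
    distinct_card[OF assms(1)] vec.subspace_span by metis

lemma card_Ext:
  fixes xs :: "('a::{field,finite}^'n) list"
  assumes "vec.subspace V" "set xs \<subseteq> V" "distinct xs" "vec.independent (set xs)"
    "length xs + r \<le> vec.dim V"
  shows "card (Ext V xs r) = (\<Prod>i\<in>{length xs..<length xs + r}. CARD('a)^vec.dim V - CARD('a)^i)"
  using assms(2-5)
proof (induction r arbitrary: xs)
  case 0
  have "Ext V xs 0 = {[]}" using 0 by (auto simp: Ext_def)
  then show ?case by simp
next
  case (Suc r)
  let ?q = "CARD('a)" and ?m = "vec.dim V" and ?j = "length xs"
  have spV: "vec.span (set xs) \<subseteq> V" using Suc.prems assms(1) vec.span_minimal by blast
  have cV: "card V = ?q ^ ?m" using card_subspace[OF assms(1)] .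
  have cD: "card (V - vec.span (set xs)) = ?q^?m - ?q^?j"
    using card_Diff_subset[OF _ spV] card_span_list[OF Suc.prems(2,3)] cV by simp
  have IH: "card (Ext V (xs@[y]) r) = (\<Prod>i\<in>{Suc ?j..<Suc ?j + r}. ?q^?m - ?q^i)"
    if y: "y \<in> V - vec.span (set xs)" for y
  proof -
    have ny: "y \<notin> set xs" using y vec.span_base by blast
    have ii: "vec.independent (insert y (set xs))"
      using y Suc.prems(3) by (intro vec.independent_insertI) auto
    then have "card (Ext V (xs@[y]) r) = (\<Prod>i\<in>{length (xs@[y])..<length (xs@[y]) + r}. ?q^?m - ?q^i)"
      using Suc.prems y ny ii by (intro Suc.IH) auto
    then show ?thesis by simp
  qed
  have inj: "inj_on (\<lambda>(y,ys). y#ys) (SIGMA y:(V - vec.span (set xs)). Ext V (xs@[y]) r)"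
    by (auto simp: inj_on_def)
  have "card (Ext V xs (Suc r)) = card (SIGMA y:(V - vec.span (set xs)). Ext V (xs@[y]) r)"
    unfolding Ext_Suc[OF assms(1)] using card_image[OF inj] .
  also have "\<dots> = (\<Sum>y\<in>V - vec.span (set xs). card (Ext V (xs@[y]) r))"
    by (rule card_SigmaI) (auto simp: finite_Ext)
  also have "\<dots> = (?q^?m - ?q^?j) * (\<Prod>i\<in>{Suc ?j..<Suc ?j + r}. ?q^?m - ?q^i)"
    using IH cD by simp
  also have "\<dots> = (\<Prod>i\<in>{?j..<?j + Suc r}. ?q^?m - ?q^i)"
    by (subst prod.atLeast_Suc_lessThan) auto
  finally show ?case .
qed



lemma vec_dim_UNIV: "vec.dim (UNIV :: ('a::field^'n) set) = CARD('n)"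
  by (simp add: card_cart_basis)

lemma Ext_span:
  fixes xs :: "('a::{field,finite}^'n) list"
  assumes "vec.subspace W" "vec.dim W = k" "length xs \<le> k" "ys \<in> Ext W xs (k - length xs)"
    "set xs \<subseteq> W"
  shows "vec.span (set (xs@ys)) = W"
proof -
  have ind: "vec.independent (set (xs@ys))" and d: "distinct (xs@ys)" and sub: "set (xs@ys) \<subseteq> W"
    and len: "length ys = k - length xs"
    using assms by (auto simp: Ext_def)
  have c: "card (set (xs@ys)) = vec.dim W" using distinct_card[OF d] len assms by simp
  have "W \<subseteq> vec.span (set (xs@ys))" using vec.card_eq_dim[OF sub c] ind by simp
  moreover have "vec.span (set (xs@ys)) \<subseteq> W" using sub assms(1) vec.span_minimal by blast
  ultimately show ?thesis by blast
qed

lemma count_sub: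
  fixes xs :: "('a::{field,finite}^'n) list"
  assumes "distinct xs" "vec.independent (set xs)" "length xs \<le> k" "k \<le> CARD('n)"
  shows "card {W. vec.subspace W \<and> vec.dim W = k \<and> set xs \<subseteq> W} *
           (\<Prod>i\<in>{length xs..<k}. CARD('a)^k - CARD('a)^i)
       = (\<Prod>i\<in>{length xs..<k}. CARD('a)^CARD('n) - CARD('a)^i)"
proof -
  let ?Ws = "{W. vec.subspace W \<and> vec.dim W = k \<and> set xs \<subseteq> W}"
  let ?r = "k - length xs"
  let ?T = "Ext (UNIV :: ('a^'n) set) xs ?r"
  have cT: "card ?T = (\<Prod>i\<in>{length xs..<k}. CARD('a)^CARD('n) - CARD('a)^i)"
    using card_Ext[of UNIV xs ?r] assms by (simp add: vec_dim_UNIV card_cart_basis)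
  have T: "?T = (\<Union>W\<in>?Ws. Ext W xs ?r)"
  proof
    show "?T \<subseteq> (\<Union>W\<in>?Ws. Ext W xs ?r)"
    proof
      fix ys assume ys: "ys \<in> ?T"
      let ?W = "vec.span (set (xs@ys))"
      have ind: "vec.independent (set (xs@ys))" and d: "distinct (xs@ys)" and len: "length ys = ?r"
        using ys by (auto simp: Ext_def)
      have "vec.dim ?W = k" using vec.dim_span_eq_card_independent[OF ind] distinct_card[OF d] len assms
        by simp
      moreover have "set (xs@ys) \<subseteq> ?W" by (rule vec.span_superset)
      ultimately have "?W \<in> ?Ws" "ys \<in> Ext ?W xs ?r" using ys by (auto simp: Ext_def vec.subspace_span)
      then show "ys \<in> (\<Union>W\<in>?Ws. Ext W xs ?r)" by blast
    qed
    show "(\<Union>W\<in>?Ws. Ext W xs ?r) \<subseteq> ?T" by (auto simp: Ext_def)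
  qed
  have "card ?T = (\<Sum>W\<in>?Ws. card (Ext W xs ?r))"
    unfolding T
  proof (rule card_UN_disjoint)
    show "finite ?Ws" by simp
    show "\<forall>W\<in>?Ws. finite (Ext W xs ?r)" by (simp add: finite_Ext)
    show "\<forall>W\<in>?Ws. \<forall>W'\<in>?Ws. W \<noteq> W' \<longrightarrow> Ext W xs ?r \<inter> Ext W' xs ?r = {}"
      using Ext_span assms(3) by blast
  qed
  also have "\<dots> = (\<Sum>W\<in>?Ws. \<Prod>i\<in>{length xs..<k}. CARD('a)^k - CARD('a)^i)"
  proof (rule sum.cong)
    fix W assume W: "W \<in> ?Ws"
    show "card (Ext W xs ?r) = (\<Prod>i\<in>{length xs..<k}. CARD('a)^k - CARD('a)^i)"
      using card_Ext[of W xs ?r] W assms by simp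
  qed simp
  finally show ?thesis using cT by simp
qed



lemma qfact_0[simp]: "qfact p 0 = 1" by (simp add: qfact_def)

lemma qfact_Suc: "qfact p (Suc m) = qfact p m * qint p (Suc m)"
  by (simp add: qfact_def prod.nat_ivl_Suc' mult.commute)

lemma qint_pos: "p \<ge> 2 \<Longrightarrow> m \<ge> 1 \<Longrightarrow> qint p m > 0"
  unfolding qint_def by (intro divide_pos_pos) (auto intro!: one_less_power)

lemma qfact_pos: "p \<ge> 2 \<Longrightarrow> qfact p m > 0"
  by (induction m) (auto simp: qfact_Suc qint_pos)

lemma prod_qfact:
  assumes "p \<ge> 2" "k \<le> n"
  shows "(\<Prod>i<k. real p ^ n - real p ^ i) * qfact p (n - k)
       = (\<Prod>i<k. real p ^ i * (real p - 1)) * qfact p n"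
  using assms(2)
proof (induction k)
  case 0 then show ?case by simp
next
  case (Suc k)
  let ?x = "real p"
  have x1: "?x - 1 \<noteq> 0" using assms by simp
  have nk: "n - k = Suc (n - Suc k)" using Suc.prems by simp
  have pw: "?x ^ k * ?x ^ (n - k) = ?x ^ n" using Suc.prems by (simp flip: power_add)
  have IH: "(\<Prod>i<k. ?x ^ n - ?x ^ i) * (qfact p (n - Suc k) * ((?x ^ (n-k) - 1) / (?x - 1)))
       = (\<Prod>i<k. ?x ^ i * (?x - 1)) * qfact p n"
    using Suc by (simp add: nk qfact_Suc qint_def)
  have e: "?x ^ n - ?x ^ k = ?x ^ k * (?x ^ (n-k) - 1)" using pw by (simp add: algebra_simps)
  have gen: "\<And>P Q c z y. (y::real) \<noteq> 0 \<Longrightarrow> P * Q * (c * z) = P * (Q * (z / y)) * (c * y)"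
    by (simp add: field_simps)
  have "(\<Prod>i<Suc k. ?x ^ n - ?x ^ i) * qfact p (n - Suc k)
      = (\<Prod>i<k. ?x ^ n - ?x ^ i) * qfact p (n - Suc k) * (?x ^ k * (?x ^ (n-k) - 1))"
    by (simp only: prod.lessThan_Suc e ac_simps)
  also have "\<dots> = (\<Prod>i<k. ?x ^ n - ?x ^ i) * (qfact p (n - Suc k) * ((?x ^ (n-k) - 1) / (?x - 1))) * (?x ^ k * (?x - 1))"
    by (rule gen[OF x1])
  also have "\<dots> = (\<Prod>i<Suc k. ?x ^ i * (?x - 1)) * qfact p n"
    using IH by (simp only: prod.lessThan_Suc ac_simps)
  finally show ?case .
qed

lemma ratio0:
  assumes "p \<ge> 2" "k \<le> n"
  shows "(\<Prod>i<k. real p ^ n - real p ^ i) / (\<Prod>i<k. real p ^ k - real p ^ i) = G p k n"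
proof -
  let ?c = "\<Prod>i<k. real p ^ i * (real p - 1)"
  have c: "?c \<noteq> 0" using assms by (simp add: prod_zero_iff)
  have q0: "qfact p (n - k) \<noteq> 0" using qfact_pos[OF assms(1)] by (metis less_irrefl)
  have N: "(\<Prod>i<k. real p ^ n - real p ^ i) = ?c * qfact p n / qfact p (n - k)"
    using prod_qfact[OF assms] q0 by (simp add: eq_divide_eq)
  have D: "(\<Prod>i<k. real p ^ k - real p ^ i) = ?c * qfact p k"
    using prod_qfact[OF assms(1), of k k] by simp
  have gen: "\<And>a b c d. (c::real) \<noteq> 0 \<Longrightarrow> b \<noteq> 0 \<Longrightarrow> d \<noteq> 0 \<Longrightarrow> (c*a/d)/(c*b) = a/(b*d)"
    by (simp add: field_simps)
  have "qfact p k \<noteq> 0" using qfact_pos[OF assms(1)] by (metis less_irrefl)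
  then have "?c * qfact p n / qfact p (n - k) / (?c * qfact p k) = qfact p n / (qfact p k * qfact p (n - k))"
    using gen[OF c _ q0] by blast
  then show ?thesis unfolding N D G_def .
qed

lemma prod_shift1:
  assumes "m \<ge> 1" "k \<ge> 1"
  shows "(\<Prod>i\<in>{1..<k}. (x::real) ^ m - x ^ i) = x ^ (k - 1) * (\<Prod>i<k-1. x ^ (m-1) - x ^ i)"
proof -
  obtain k' where k: "k = Suc k'" using assms(2) by (cases k) auto
  obtain m' where m: "m = Suc m'" using assms(1) by (cases m) auto
  have "(\<Prod>i\<in>{1..<k}. x ^ m - x ^ i) = (\<Prod>i\<in>{0..<k'}. x ^ m - x ^ Suc i)"
    unfolding k using prod.shift_bounds_Suc_ivl[of "\<lambda>i. x ^ m - x ^ i" 0 k'] by simp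
  also have "\<dots> = (\<Prod>i\<in>{0..<k'}. x * (x ^ m' - x ^ i))"
    unfolding m by (simp add: algebra_simps)
  also have "\<dots> = x ^ k' * (\<Prod>i\<in>{0..<k'}. x ^ m' - x ^ i)"
    by (simp add: prod.distrib)
  finally show ?thesis using k m by (simp add: atLeast0LessThan)
qed

lemma ratio1:
  assumes "p \<ge> 2" "1 \<le> k" "k \<le> n"
  shows "(\<Prod>i\<in>{1..<k}. real p ^ n - real p ^ i) / (\<Prod>i\<in>{1..<k}. real p ^ k - real p ^ i)
         = G p (k-1) (n-1)"
proof -
  have kn: "k - 1 \<le> n - 1" using assms by simp
  have A: "(\<Prod>i\<in>{1..<k}. real p ^ n - real p ^ i) = real p ^ (k-1) * (\<Prod>i<k-1. real p ^ (n-1) - real p ^ i)"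
    by (rule prod_shift1) (use assms in auto)
  have B: "(\<Prod>i\<in>{1..<k}. real p ^ k - real p ^ i) = real p ^ (k-1) * (\<Prod>i<k-1. real p ^ (k-1) - real p ^ i)"
    by (rule prod_shift1) (use assms in auto)
  have nz: "real p ^ (k-1) \<noteq> 0" using assms by simp
  show ?thesis unfolding A B mult_divide_mult_cancel_left[OF nz] by (rule ratio0[OF assms(1) kn])
qed



lemma real_prod_diff:
  assumes "\<And>i. i \<in> A \<Longrightarrow> b i \<le> (a::nat)"
  shows "real (\<Prod>i\<in>A. a - b i) = (\<Prod>i\<in>A. real a - real (b i))"
  unfolding of_nat_prod by (rule prod.cong) (use assms in \<open>auto simp: of_nat_diff\<close>)

lemma real_prod_pow_diff:
  assumes "\<And>i. i \<in> A \<Longrightarrow> i \<le> m" "(q::nat) \<ge> 1"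
  shows "real (\<Prod>i\<in>A. q^m - q^i) = (\<Prod>i\<in>A. real q ^ m - real q ^ i)"
  unfolding of_nat_prod
proof (rule prod.cong)
  fix i assume "i \<in> A"
  then have "q^i \<le> q^m" using assms by (intro power_increasing) auto
  then show "real (q^m - q^i) = real q ^ m - real q ^ i" by (simp add: of_nat_diff)
qed simp

lemma card_field_ge2: "CARD('a::{field,finite}) \<ge> 2"
proof -
  have "card {0::'a, 1} \<le> CARD('a)" by (rule card_mono) auto
  then show ?thesis by simp
qed

lemma count_real:
  fixes xs :: "('a::{field,finite}^'n) list"
  assumes "distinct xs" "vec.independent (set xs)" "length xs \<le> k" "k \<le> CARD('n)"
  shows "real (card {W. vec.subspace W \<and> vec.dim W = k \<and> set xs \<subseteq> W}) =
     (\<Prod>i\<in>{length xs..<k}. real CARD('a) ^ CARD('n) - real CARD('a) ^ i) /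
     (\<Prod>i\<in>{length xs..<k}. real CARD('a) ^ k - real CARD('a) ^ i)"
proof -
  let ?q = "CARD('a)"
  have q2: "?q \<ge> 2" by (rule card_field_ge2)
  have e: "real (card {W. vec.subspace W \<and> vec.dim W = k \<and> set xs \<subseteq> W}) *
           real (\<Prod>i\<in>{length xs..<k}. ?q^k - ?q^i)
       = real (\<Prod>i\<in>{length xs..<k}. ?q^CARD('n) - ?q^i)"
    unfolding of_nat_mult[symmetric] using count_sub[OF assms] by (rule arg_cong)
  have le1: "\<And>i. i \<in> {length xs..<k} \<Longrightarrow> ?q^i \<le> ?q^k"
    using q2 by (intro power_increasing) auto
  have le2: "\<And>i. i \<in> {length xs..<k} \<Longrightarrow> ?q^i \<le> ?q^CARD('n)"
    using q2 assms by (intro power_increasing) auto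
  have nz: "(\<Prod>i\<in>{length xs..<k}. real ?q ^ k - real ?q ^ i) \<noteq> 0"
  proof -
    have "\<And>i. i \<in> {length xs..<k} \<Longrightarrow> real ?q ^ i < real ?q ^ k"
      using q2 by (intro power_strict_increasing) auto
    then have "\<forall>i\<in>{length xs..<k}. real ?q ^ k - real ?q ^ i \<noteq> 0" by force
    then show ?thesis by (subst prod_zero_iff) auto
  qed
  have gen: "\<And>a b c. (b::real) \<noteq> 0 \<Longrightarrow> a * b = c \<Longrightarrow> a = c / b" by (simp add: eq_divide_eq)
  have e2: "real (card {W. vec.subspace W \<and> vec.dim W = k \<and> set xs \<subseteq> W}) *
     (\<Prod>i\<in>{length xs..<k}. real ?q ^ k - real ?q ^ i)
     = (\<Prod>i\<in>{length xs..<k}. real ?q ^ CARD('n) - real ?q ^ i)"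
    using e real_prod_pow_diff[of "{length xs..<k}" k ?q] real_prod_pow_diff[of "{length xs..<k}" "CARD('n)" ?q]
      q2 assms by simp
  show ?thesis by (rule gen[OF nz e2])
qed

lemma card_Wk:
  assumes "k \<le> CARD('n)"
  shows "real (card {W :: ('a::{field,finite}^'n) set. vec.subspace W \<and> vec.dim W = k})
       = G CARD('a) k CARD('n)"
proof -
  have "real (card {W :: ('a^'n) set. vec.subspace W \<and> vec.dim W = k \<and> set [] \<subseteq> W})
       = (\<Prod>i<k. real CARD('a) ^ CARD('n) - real CARD('a) ^ i) /
         (\<Prod>i<k. real CARD('a) ^ k - real CARD('a) ^ i)"
    using count_real[of "[] :: ('a^'n) list" k] assms by (simp add: atLeast0LessThan vec.independent_empty)
  also have "\<dots> = G CARD('a) k CARD('n)" by (rule ratio0[OF card_field_ge2 assms])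
  finally show ?thesis by simp
qed

lemma card_Wv:
  fixes v :: "'a::{field,finite}^'n"
  assumes "v \<noteq> 0" "1 \<le> k" "k \<le> CARD('n)"
  shows "real (card {W. vec.subspace W \<and> vec.dim W = k \<and> v \<in> W})
       = G CARD('a) (k-1) (CARD('n)-1)"
proof -
  have ind: "vec.independent (set [v])"
    using vec.independent_insertI[of v "{}"] assms(1) by (simp add: vec.span_empty)
  have "real (card {W. vec.subspace W \<and> vec.dim W = k \<and> set [v] \<subseteq> W})
       = (\<Prod>i\<in>{1..<k}. real CARD('a) ^ CARD('n) - real CARD('a) ^ i) /
         (\<Prod>i\<in>{1..<k}. real CARD('a) ^ k - real CARD('a) ^ i)"
    using count_real[of "[v]" k, OF _ ind] assms by simp
  also have "\<dots> = G CARD('a) (k-1) (CARD('n)-1)" by (rule ratio1[OF card_field_ge2 assms(2,3)])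
  finally show ?thesis by simp
qed

lemma nu_formula:
  fixes U :: "('a::{field,finite}^'n) set"
  assumes "vec.subspace U" "vec.dim U = l" "1 \<le> k" "k \<le> CARD('n)"
  shows "real (nu k U) = G CARD('a) k CARD('n) + (real CARD('a) ^ l - 1) * G CARD('a) (k-1) (CARD('n)-1)"
proof -
  let ?Wk = "{W :: ('a^'n) set. vec.subspace W \<and> vec.dim W = k}"
  let ?c = "\<lambda>u::'a^'n. card {W. vec.subspace W \<and> vec.dim W = k \<and> u \<in> W}"
  have "nu k U = (\<Sum>W\<in>?Wk. card (W \<inter> U))"
    unfolding nu_def
    by (rule sum.cong) (auto simp: card_subspace vec.subspace_inter assms(1))
  also have "\<dots> = (\<Sum>W\<in>?Wk. \<Sum>u\<in>U. if u \<in> W then 1 else 0)"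
  proof (rule sum.cong)
    fix W
    have "W \<inter> U = {u \<in> U. u \<in> W}" by auto
    then show "card (W \<inter> U) = (\<Sum>u\<in>U. if u \<in> W then 1 else 0)"
      by (simp add: sum.inter_filter[symmetric])
  qed simp
  also have "\<dots> = (\<Sum>u\<in>U. \<Sum>W\<in>?Wk. if u \<in> W then 1 else 0)"
    by (rule sum.swap)
  also have "\<dots> = (\<Sum>u\<in>U. ?c u)"
  proof (rule sum.cong)
    fix u
    have "{W \<in> ?Wk. u \<in> W} = {W. vec.subspace W \<and> vec.dim W = k \<and> u \<in> W}" by auto
    then show "(\<Sum>W\<in>?Wk. if u \<in> W then 1 else 0) = ?c u"
      by (simp add: sum.inter_filter[symmetric])
  qed simp
  finally have nu: "nu k U = (\<Sum>u\<in>U. ?c u)" .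
  have z: "0 \<in> U" using assms(1) vec.subspace_0 by blast
  have "{W. vec.subspace W \<and> vec.dim W = k \<and> (0::'a^'n) \<in> W} = ?Wk"
    by (auto simp: vec.subspace_0)
  then have c0: "?c 0 = card ?Wk" by (rule arg_cong[where f=card])
  have "real (nu k U) = real (?c 0) + (\<Sum>u\<in>U - {0}. real (?c u))"
    unfolding nu of_nat_sum using sum.remove[OF _ z] by simp
  also have "\<dots> = G CARD('a) k CARD('n) + (\<Sum>u\<in>U - {0}. G CARD('a) (k-1) (CARD('n)-1))"
  proof -
    have "(\<Sum>u\<in>U - {0}. real (?c u)) = (\<Sum>u\<in>U - {0}. G CARD('a) (k-1) (CARD('n)-1))"
      by (rule sum.cong) (use card_Wv[OF _ assms(3,4), where 'a='a] in auto)
    then show ?thesis using c0 card_Wk[OF assms(4), where 'a='a] by simp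
  qed
  also have "\<dots> = G CARD('a) k CARD('n) + (real CARD('a) ^ l - 1) * G CARD('a) (k-1) (CARD('n)-1)"
  proof -
    have "card (U - {0}) = CARD('a) ^ l - 1" using card_subspace[OF assms(1)] z assms(2) by simp
    moreover have "1 \<le> CARD('a) ^ l" by simp
    ultimately have "real (card (U - {0})) = real CARD('a) ^ l - 1" by (simp add: of_nat_diff)
    then show ?thesis by simp
  qed
  finally show ?thesis .
qed



lemma key_identity:
  fixes a b c d :: real
  assumes "a * b = c * d"
  shows "(a*b - 1 + (a-1)*(c-1)) * (a*b) = (a*b - 1 + (b-1)*(d-1)) * (c*a)"
proof -
  have "(a*b - 1 + (a-1)*(c-1)) * (a*b) - (a*b - 1 + (b-1)*(d-1)) * (c*a) = a*(a*b-c*d)*(b-1)"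
    by (simp add: algebra_simps)
  then show ?thesis using assms by simp
qed

lemma ratio_alg:
  assumes p: "p \<ge> 2" and k: "1 \<le> k" "k + 1 \<le> n" and l: "l \<le> n"
  shows "(G p k n + (real p ^ l - 1) * G p (k-1) (n-1)) /
         (G p (n-k) n + (real p ^ (n-l) - 1) * G p (n-k-1) (n-1))
       = real p powi (int k + int l - int n)"
proof -
  let ?x = "real p"
  define A where "A = qfact p (n-1)"
  define B where "B = qfact p (k-1)"
  define C where "C = qfact p (n-k-1)"
  have x1: "?x - 1 > 0" using p by simp
  have Apos: "A > 0" "B > 0" "C > 0" unfolding A_def B_def C_def using qfact_pos[OF p] by auto
  have qk: "qint p k > 0" "qint p (n-k) > 0" using qint_pos[OF p] k by auto
  obtain n' where n': "n = Suc n'" using k by (cases n) auto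
  have fn: "qfact p n = A * qint p n" unfolding A_def using qfact_Suc[of p n'] n' by simp
  have fk: "qfact p k = B * qint p k" unfolding B_def using qfact_Suc[of p "k-1"] k by simp
  obtain m' where m': "n - k = Suc m'" using k by (cases "n - k") auto
  have fnk: "qfact p (n-k) = C * qint p (n-k)" unfolding C_def using qfact_Suc[of p m'] m' by simp
  have e1: "n - 1 - (k - 1) = n - k" "n - (n - k) = k" "n - 1 - (n - k - 1) = k" using k by auto
  define K where "K = A / (B * C * qint p k * qint p (n-k))"
  have Kpos: "K > 0" unfolding K_def using Apos qk by simp
  have g1: "G p k n = K * qint p n" unfolding G_def K_def fn fk fnk using Apos qk
    by (simp add: field_simps)
  have g2: "G p (k-1) (n-1) = K * qint p k" unfolding G_def K_def e1 fnk using Apos qk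
    by (simp add: field_simps B_def A_def)
  have g3: "G p (n-k) n = K * qint p n" unfolding G_def K_def e1 fn fk fnk using Apos qk
    by (simp add: field_simps)
  have g4: "G p (n-k-1) (n-1) = K * qint p (n-k)" unfolding G_def K_def e1 fk using Apos qk
    by (simp add: field_simps C_def A_def)
  define a where "a = ?x ^ l"
  define b where "b = ?x ^ (n-l)"
  define c where "c = ?x ^ k"
  define d where "d = ?x ^ (n-k)"
  have ab: "a * b = ?x ^ n" unfolding a_def b_def using l by (simp flip: power_add)
  have cd: "c * d = ?x ^ n" unfolding c_def d_def using k by (simp flip: power_add)
  have ca: "c * a = ?x ^ (k + l)" unfolding a_def c_def by (simp add: power_add)
  have qn: "qint p n = (a*b - 1) / (?x - 1)" using ab by (simp add: qint_def)
  have qk': "qint p k = (c - 1) / (?x - 1)" by (simp add: qint_def c_def)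
  have qnk': "qint p (n-k) = (d - 1) / (?x - 1)" by (simp add: qint_def d_def)
  have N: "G p k n + (?x ^ l - 1) * G p (k-1) (n-1) = K / (?x - 1) * (a*b - 1 + (a-1)*(c-1))"
  proof -
    have "G p k n + (?x ^ l - 1) * G p (k-1) (n-1) = K*((a*b-1)/(?x-1)) + (a-1)*(K*((c-1)/(?x-1)))"
      unfolding g1 g2 qn qk' a_def by simp
    also have "\<dots> = K / (?x - 1) * (a*b - 1 + (a-1)*(c-1))"
      by (simp add: divide_inverse algebra_simps)
    finally show ?thesis .
  qed
  have D: "G p (n-k) n + (?x ^ (n-l) - 1) * G p (n-k-1) (n-1) = K / (?x - 1) * (a*b - 1 + (b-1)*(d-1))"
  proof -
    have "G p (n-k) n + (?x ^ (n-l) - 1) * G p (n-k-1) (n-1) = K*((a*b-1)/(?x-1)) + (b-1)*(K*((d-1)/(?x-1)))"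
      unfolding g3 g4 qn qnk' b_def by simp
    also have "\<dots> = K / (?x - 1) * (a*b - 1 + (b-1)*(d-1))"
      by (simp add: divide_inverse algebra_simps)
    finally show ?thesis .
  qed
  have b1: "b \<ge> 1" "d \<ge> 1" unfolding b_def d_def using p by auto
  have abg: "a * b > 1" unfolding ab using p k by (intro one_less_power) auto
  have Dpos: "a*b - 1 + (b-1)*(d-1) > 0" using b1 abg by (simp add: add_pos_nonneg)
  have Kx: "K / (?x - 1) \<noteq> 0" using Kpos x1 by simp
  have abnz: "a * b \<noteq> 0" using abg by (metis mult_zero_left mult_zero_right not_one_less_zero)
  have "(a*b - 1 + (a-1)*(c-1)) / (a*b - 1 + (b-1)*(d-1)) = (c*a) / (a*b)"
  proof -
    have Dne: "a*b - 1 + (b-1)*(d-1) \<noteq> 0" using Dpos by simp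
    note kk = key_identity[OF ab[folded cd]]
    show ?thesis unfolding frac_eq_eq[OF Dne abnz] using kk by (metis mult.commute)
  qed
  then have "(G p k n + (?x ^ l - 1) * G p (k-1) (n-1)) /
         (G p (n-k) n + (?x ^ (n-l) - 1) * G p (n-k-1) (n-1)) = ?x ^ (k+l) / ?x ^ n"
    unfolding N D ca ab using Kx by simp
  also have "\<dots> = ?x powi (int (k+l) - int n)"
  proof -
    have "?x powi (int (k+l) - int n) = ?x powi (int (k+l)) / ?x powi (int n)"
      using p by (intro power_int_diff) simp
    then show ?thesis by (simp only: power_int_of_nat)
  qed
  finally show ?thesis by simp
qed


theorem lemma3p2:
  fixes U U' :: "('a::{field,finite} ^ 'n) set" and p k l :: nat
  assumes "CARD('a) = p" and "prime p"
    and "CARD('n) \<ge> 2"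
    and "1 \<le> k" and "k \<le> CARD('n) - 1"
    and "l \<le> CARD('n)"
    and "vec.subspace U" and "vec.dim U = l"
    and "vec.subspace U'" and "vec.dim U' = CARD('n) - l"
  shows "real (nu k U) = G p k CARD('n) + (real p ^ l - 1) * G p (k - 1) (CARD('n) - 1)
     \<and> real (nu k U) / real (nu (CARD('n) - k) U') = real p powi (int k + int l - int CARD('n))"
proof -
  have p2: "p \<ge> 2" using card_field_ge2[where 'a='a] assms(1) by simp
  have kn: "k \<le> CARD('n)" "k + 1 \<le> CARD('n)" using assms(3,5) by auto
  have n1: "real (nu k U) = G p k CARD('n) + (real p ^ l - 1) * G p (k - 1) (CARD('n) - 1)"
    using nu_formula[OF assms(7,8,4) kn(1)] assms(1) by simp
  have k2: "1 \<le> CARD('n) - k" "CARD('n) - k \<le> CARD('n)" using kn by auto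
  have n2: "real (nu (CARD('n) - k) U') = G p (CARD('n) - k) CARD('n)
      + (real p ^ (CARD('n) - l) - 1) * G p (CARD('n) - k - 1) (CARD('n) - 1)"
    using nu_formula[OF assms(9,10) k2] assms(1) by simp
  have "real (nu k U) / real (nu (CARD('n) - k) U') = real p powi (int k + int l - int CARD('n))"
    unfolding n1 n2 by (rule ratio_alg[OF p2 assms(4) kn(2) assms(6)])
  with n1 show ?thesis by blast
qed

end
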